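(* Let $G$ be a finite group and $\mathcal{O}$ a conjugacy class of involutions of $G$. Then $\mathcal{O}$ is of type D if and only if there exist $r,s\in\mathcal{O}$ such that the order of $rs$ is even and at least $6$.
   Context: A conjugacy class $\mathcal{O}$ of a group (regarded as a rack with $x\triangleright y=xyx^{-1}$) is of type D iff there exist $r,s\in\mathcal{O}$ with $(rs)^2\neq(sr)^2$ such that $r$ and $s$ are not conjugate in the subgroup $\langle r,s\rangle$. (In rack terms: a rack is of type D if it contains a subrack that is a disjoint union $R\sqcup S$ of two subracks with $r\triangleright(s\triangleright(r\triangleright s))\neq s$ for some $r\in R$, $s\in S$.) *)

theory Defs
  imports "HOL-Algebra.Algebra"
begin

definition conj_class :: "('a, 'b) monoid_scheme \<Rightarrow> 'a \<Rightarrow> 'a set" where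
  "conj_class G x = {g \<otimes>\<^bsub>G\<^esub> x \<otimes>\<^bsub>G\<^esub> inv\<^bsub>G\<^esub> g | g. g \<in> carrier G}"

definition involution :: "('a, 'b) monoid_scheme \<Rightarrow> 'a \<Rightarrow> bool" where
  "involution G x \<longleftrightarrow> x \<in> carrier G \<and> x \<noteq> \<one>\<^bsub>G\<^esub> \<and> x \<otimes>\<^bsub>G\<^esub> x = \<one>\<^bsub>G\<^esub>"

definition type_D :: "('a, 'b) monoid_scheme \<Rightarrow> 'a set \<Rightarrow> bool" where
  "type_D G C \<longleftrightarrow> (\<exists>r\<in>C. \<exists>s\<in>C.
      (r \<otimes>\<^bsub>G\<^esub> s) [^]\<^bsub>G\<^esub> (2::nat) \<noteq> (s \<otimes>\<^bsub>G\<^esub> r) [^]\<^bsub>G\<^esub> (2::nat) \<and>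
      \<not> (\<exists>h\<in>generate G {r, s}. h \<otimes>\<^bsub>G\<^esub> r \<otimes>\<^bsub>G\<^esub> inv\<^bsub>G\<^esub> h = s))"

end

theory Submission
  imports Defs
begin

context group
begin

lemma invol_cancel: "r \<in> carrier G \<Longrightarrow> r \<otimes> r = \<one> \<Longrightarrow> z \<in> carrier G \<Longrightarrow> r \<otimes> (r \<otimes> z) = z"
  by (simp add: m_assoc[symmetric])

lemma invol_inv: "r \<in> carrier G \<Longrightarrow> r \<otimes> r = \<one> \<Longrightarrow> inv r = r"
  by (simp add: inv_equality)

lemma conj_pow_nat:
  assumes r: "r \<in> carrier G" and rr: "r \<otimes> r = \<one>" and y: "y \<in> carrier G"
  shows "r \<otimes> y [^] (n::nat) \<otimes> r = (r \<otimes> y \<otimes> r) [^] n"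
proof (induction n)
  case 0
  then show ?case using r rr by simp
next
  case (Suc n)
  have "r \<otimes> y [^] Suc n \<otimes> r = (r \<otimes> y [^] n \<otimes> r) \<otimes> (r \<otimes> y \<otimes> r)"
    using r rr y by (simp add: m_assoc invol_cancel)
  then show ?case using Suc by simp
qed

lemma conj_pow_int:
  assumes r: "r \<in> carrier G" and rr: "r \<otimes> r = \<one>" and y: "y \<in> carrier G"
  shows "r \<otimes> y [^] (i::int) \<otimes> r = (r \<otimes> y \<otimes> r) [^] i"
proof (cases i rule: int_cases)
  case (nonneg n)
  then show ?thesis using conj_pow_nat[OF assms] by (simp add: int_pow_int)
next
  case (neg n)
  have "r \<otimes> y [^] (-int (Suc n)) \<otimes> r = r \<otimes> inv (y [^] Suc n) \<otimes> r"
    using y by (simp add: int_pow_neg_int del: of_nat_Suc)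
  also have "\<dots> = inv (r \<otimes> y [^] Suc n \<otimes> r)"
    using r y rr by (simp add: inv_mult_group invol_inv m_assoc)
  also have "\<dots> = inv ((r \<otimes> y \<otimes> r) [^] Suc n)"
    by (simp only: conj_pow_nat[OF assms])
  also have "\<dots> = (r \<otimes> y \<otimes> r) [^] (-int (Suc n))"
    using r y by (simp add: int_pow_neg_int del: of_nat_Suc)
  finally show ?thesis using neg by simp
qed

context
  fixes r s
  assumes r: "r \<in> carrier G" and s: "s \<in> carrier G"
    and rr: "r \<otimes> r = \<one>" and ss: "s \<otimes> s = \<one>"
begin

lemma t_carr: "r \<otimes> s \<in> carrier G" using r s by simp

lemma rtr: "r \<otimes> (r \<otimes> s) \<otimes> r = inv (r \<otimes> s)"
  using r s rr ss by (simp add: inv_mult_group invol_inv invol_cancel m_assoc)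

lemma swap: "r \<otimes> (r \<otimes> s) [^] (i::int) = (r \<otimes> s) [^] (-i) \<otimes> r"
proof -
  have "r \<otimes> (r \<otimes> s) [^] i \<otimes> r = (r \<otimes> s) [^] (-i)"
    using conj_pow_int[OF r rr t_carr, of i] rtr t_carr
    by (simp add: int_pow_inv int_pow_neg)
  hence "r \<otimes> (r \<otimes> s) [^] i \<otimes> r \<otimes> r = (r \<otimes> s) [^] (-i) \<otimes> r" by simp
  thus ?thesis using r rr t_carr by (simp add: m_assoc)
qed

lemma s_eq: "s = (r \<otimes> s) [^] (-1::int) \<otimes> r"
proof -
  have "s = r \<otimes> (r \<otimes> s) [^] (1::int)" using r s rr t_carr by (simp add: invol_cancel)
  thus ?thesis using swap[of 1] by simp
qed

lemma sr_inv: "s \<otimes> r = inv (r \<otimes> s)"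
  using r s rr ss by (simp add: inv_mult_group invol_inv)

lemma part_a: "(r \<otimes> s) [^] (2::nat) \<noteq> (s \<otimes> r) [^] (2::nat) \<longleftrightarrow> \<not> ord (r \<otimes> s) dvd 4"
proof -
  let ?u = "(r \<otimes> s) [^] (2::nat)"
  have u: "?u \<in> carrier G" using t_carr by simp
  have e1: "(s \<otimes> r) [^] (2::nat) = inv ?u" using sr_inv t_carr by (simp add: nat_pow_inv)
  have e2: "?u \<otimes> ?u = (r \<otimes> s) [^] (4::nat)" using t_carr by (simp add: nat_pow_mult)
  have "?u = inv ?u \<longleftrightarrow> ?u \<otimes> ?u = \<one>"
  proof
    assume "?u = inv ?u" thus "?u \<otimes> ?u = \<one>" using u by (metis r_inv)
  next
    assume "?u \<otimes> ?u = \<one>" thus "?u = inv ?u" using u by (metis inv_equality)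
  qed
  thus ?thesis using e1 e2 pow_eq_id[OF t_carr, of 4] by auto
qed

lemma part_b_odd:
  assumes "odd (ord (r \<otimes> s))"
  shows "\<exists>h\<in>generate G {r, s}. h \<otimes> r \<otimes> inv h = s"
proof -
  let ?t = "r \<otimes> s"
  obtain k where k: "ord ?t = 2 * k + 1" using assms oddE by blast
  have sg: "subgroup (generate G {r, s}) G" using r s by (simp add: generate_is_subgroup)
  have tg: "?t \<in> generate G {r, s}"
    by (simp add: generate.eng generate.incl)
  have hg: "?t [^] (int k) \<in> generate G {r, s}"
    using subgroup_int_pow_closed[OF sg tg] .
  have "?t [^] (int k) \<otimes> r \<otimes> inv (?t [^] (int k)) = ?t [^] (int k) \<otimes> (r \<otimes> ?t [^] (- int k))"
    using t_carr r by (simp add: m_assoc int_pow_neg)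
  also have "\<dots> = ?t [^] (int k) \<otimes> (?t [^] (int k) \<otimes> r)"
    using swap[of "- int k"] by simp
  also have "\<dots> = (?t [^] (int k) \<otimes> ?t [^] (int k)) \<otimes> r"
    using t_carr r by (simp add: m_assoc)
  also have "?t [^] (int k) \<otimes> ?t [^] (int k) = ?t [^] (int k + int k)"
    by (rule int_pow_mult[symmetric, OF t_carr])
  also have "?t [^] (int k + int k) = ?t [^] (-1::int)"
  proof -
    have "(-1 - (int k + int k)) = - int (ord ?t)" using k by simp
    hence "int (ord ?t) dvd (-1 - (int k + int k))" by simp
    thus ?thesis using int_pow_eq[OF t_carr, of "int k + int k" "-1"] by simp
  qed
  finally have "?t [^] (int k) \<otimes> r \<otimes> inv (?t [^] (int k)) = s" using s_eq by simp
  thus ?thesis using hg by blast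
qed

lemma part_b_even:
  assumes ev: "even (ord (r \<otimes> s))"
  shows "\<not> (\<exists>h\<in>generate G {r, s}. h \<otimes> r \<otimes> inv h = s)"
proof
  let ?t = "r \<otimes> s"
  define C where "C = {?t [^] (2*j) \<otimes> r | j::int. True}"
  have refl: "h \<otimes> c \<otimes> inv h \<in> C" if h: "h \<in> {r, s}" and c: "c \<in> C" for h c
  proof -
    obtain j :: int where j: "c = ?t [^] (2*j) \<otimes> r" using c C_def by auto
    show ?thesis
    proof (cases "h = r")
      case True
      have "r \<otimes> c \<otimes> inv r = r \<otimes> ?t [^] (2*j)"
        using j r rr t_carr by (simp add: invol_inv m_assoc)
      also have "\<dots> = ?t [^] (2*(-j)) \<otimes> r" using swap[of "2*j"] by simp
      finally have "r \<otimes> c \<otimes> inv r = ?t [^] (2*(-j)) \<otimes> r" .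
      thus ?thesis using True C_def by blast
    next
      case False
      hence hs: "h = s" using h by auto
      have s2: "s = r \<otimes> ?t" using r s rr by (simp add: invol_cancel)
      have "s \<otimes> c \<otimes> inv s = ?t [^] (-1::int) \<otimes> r \<otimes> (?t [^] (2*j) \<otimes> r) \<otimes> (r \<otimes> ?t)"
        using j s_eq s2 invol_inv[OF s ss] by metis
      also have "\<dots> = ?t [^] (-1::int) \<otimes> (r \<otimes> (?t [^] (2*j) \<otimes> ?t))"
        using r t_carr rr by (simp add: m_assoc invol_cancel)
      also have "?t [^] (2*j) \<otimes> ?t = ?t [^] (2*j + 1)"
        using t_carr by (simp add: int_pow_mult)
      also have "r \<otimes> ?t [^] (2*j + 1) = ?t [^] (-(2*j+1)) \<otimes> r" by (rule swap)
      also have "?t [^] (-1::int) \<otimes> (?t [^] (-(2*j+1)) \<otimes> r) = (?t [^] (-1::int) \<otimes> ?t [^] (-(2*j+1))) \<otimes> r"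
        using t_carr r by (simp add: m_assoc)
      also have "?t [^] (-1::int) \<otimes> ?t [^] (-(2*j+1)) = ?t [^] (-1 + -(2*j+1))"
        by (rule int_pow_mult[symmetric, OF t_carr])
      also have "(-1 + -(2*j+1)) = 2 * (-j - 1)" by simp
      finally have "s \<otimes> c \<otimes> inv s = ?t [^] (2 * (-j - 1)) \<otimes> r" .
      thus ?thesis using hs C_def by blast
    qed
  qed
  have inv_h: "inv h = h" if "h \<in> {r, s}" for h
    using that invol_inv[OF r rr] invol_inv[OF s ss] by auto
  have gen: "h \<in> carrier G \<and> (\<forall>c\<in>C. h \<otimes> c \<otimes> inv h \<in> C)" if "h \<in> generate G {r, s}" for h
    using that
  proof (induction rule: generate.induct)
    case one
    have "C \<subseteq> carrier G" using C_def t_carr r by auto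
    then show ?case by auto
  next
    case (incl h)
    then show ?case using refl r s by auto
  next
    case (inv h)
    then show ?case using refl r s inv_h by auto
  next
    case (eng h1 h2)
    have "C \<subseteq> carrier G" using C_def t_carr r by auto
    moreover have "h1 \<otimes> h2 \<otimes> c \<otimes> inv (h1 \<otimes> h2) = h1 \<otimes> (h2 \<otimes> c \<otimes> inv h2) \<otimes> inv h1"
      if "c \<in> carrier G" for c
      using eng.IH that by (simp add: inv_mult_group m_assoc)
    ultimately show ?case using eng.IH by auto
  qed
  assume "\<exists>h\<in>generate G {r, s}. h \<otimes> r \<otimes> inv h = s"
  then obtain h where h: "h \<in> generate G {r, s}" "h \<otimes> r \<otimes> inv h = s" by blast
  have "r \<in> C" using C_def r by (auto intro!: exI[of _ 0])
  hence "s \<in> C" using gen[OF h(1)] h(2) by auto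
  then obtain j :: int where "s = ?t [^] (2*j) \<otimes> r" using C_def by auto
  hence "?t [^] (2*j) \<otimes> r = ?t [^] (-1::int) \<otimes> r" using s_eq by simp
  hence "?t [^] (2*j) = ?t [^] (-1::int)" using r t_carr by (meson int_pow_closed r_cancel)
  hence "int (ord ?t) dvd (-1 - 2*j)" using int_pow_eq[OF t_carr] by simp
  moreover have "even (int (ord ?t))" using ev by simp
  ultimately have "even (-1 - 2*j)" using dvd_trans by blast
  thus False by simp
qed

end
end

theorem lemma2p6:
  fixes G (structure) and x :: 'a
  assumes "group G" and "finite (carrier G)"
    and "x \<in> carrier G" and "involution G x"
  shows "type_D G (conj_class G x) \<longleftrightarrow>
    (\<exists>r\<in>conj_class G x. \<exists>s\<in>conj_class G x.
       even (group.ord G (r \<otimes> s)) \<and> group.ord G (r \<otimes> s) \<ge> 6)"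
proof -
  interpret group G by fact
  have mem: "r \<in> carrier G \<and> r \<otimes> r = \<one>" if rc: "r \<in> conj_class G x" for r
  proof -
    obtain g where g: "g \<in> carrier G" "r = g \<otimes> x \<otimes> inv g" using rc unfolding conj_class_def by auto
    have xx: "x \<otimes> x = \<one>" using assms(4) unfolding involution_def by blast
    have cc: "inv g \<otimes> (g \<otimes> z) = z" if "z \<in> carrier G" for z
      using g(1) that by (simp add: m_assoc[symmetric])
    have "r \<otimes> r = g \<otimes> (x \<otimes> x) \<otimes> inv g" using g assms(3) by (simp add: m_assoc cc)
    thus ?thesis using g xx assms(3) by simp
  qed
  have key: "((r \<otimes> s) [^] (2::nat) \<noteq> (s \<otimes> r) [^] (2::nat) \<and>
      \<not> (\<exists>h\<in>generate G {r, s}. h \<otimes> r \<otimes> inv h = s)) \<longleftrightarrow>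
      (even (ord (r \<otimes> s)) \<and> ord (r \<otimes> s) \<ge> 6)"
    if "r \<in> conj_class G x" "s \<in> conj_class G x" for r s
  proof -
    have R: "r \<in> carrier G" "r \<otimes> r = \<one>" and S: "s \<in> carrier G" "s \<otimes> s = \<one>"
      using mem that by auto
    have ge1: "ord (r \<otimes> s) \<ge> 1" using ord_ge_1[OF assms(2)] R S by simp
    have A: "(r \<otimes> s) [^] (2::nat) \<noteq> (s \<otimes> r) [^] (2::nat) \<longleftrightarrow> \<not> ord (r \<otimes> s) dvd 4"
      using part_a[OF R(1) S(1) R(2) S(2)] .
    have B: "(\<exists>h\<in>generate G {r, s}. h \<otimes> r \<otimes> inv h = s) \<longleftrightarrow> odd (ord (r \<otimes> s))"
      using part_b_odd[OF R(1) S(1) R(2) S(2)] part_b_even[OF R(1) S(1) R(2) S(2)] by blast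
    have arith: "(\<not> n dvd 4 \<and> even n) \<longleftrightarrow> (even n \<and> n \<ge> 6)" if "n \<ge> 1" for n :: nat
    proof
      assume a: "\<not> n dvd 4 \<and> even n"
      hence "n \<noteq> 2" "n \<noteq> 4" by auto
      moreover have "n \<noteq> 3" "n \<noteq> 5" "n \<noteq> 1" using a by auto
      ultimately show "even n \<and> n \<ge> 6" using a that by auto
    next
      assume a: "even n \<and> n \<ge> 6"
      hence "\<not> n dvd 4" using dvd_imp_le[of n 4] by auto
      thus "\<not> n dvd 4 \<and> even n" using a by auto
    qed
    show ?thesis using A B arith[OF ge1] by blast
  qed
  show ?thesis unfolding type_D_def using key by blast
qed

end
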